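(* Let $L/L^G$ be a Galois extension of number fields with Galois group $G$, and let $w_L$ be the order of the group $\mu(L)$ of roots of unity in $L$. Fix a prime $p\mid w_L$ and let $S_p$ be the set of subgroups $H\le G$ with $p\nmid|H|$. For $H\le G$ let $\nu(H,p)$ be the $p$-adic valuation of the order $w_{L^H}$ of the group of roots of unity of the fixed field $L^H$. If $(n_H)_{H\in S_p}$ are integers with $\sum_{H\in S_p}n_H\varepsilon_H=0$ in $\mathbb{Q}[G]$, then $\sum_{H\in S_p}n_H\nu(H,p)=0$.
   Context: $\varepsilon_H=\frac1{|H|}\sum_{h\in H}h$ is the norm idempotent of $H$. *)

theory Defs
  imports Complex_Main "HOL-Computational_Algebra.Primes"
begin

text \<open>Number fields are modelled as subfields of the complex numbers that are
finite-dimensional over the rationals.\<close>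

definition is_subfield :: "complex set \<Rightarrow> bool" where
  "is_subfield K \<longleftrightarrow> 0 \<in> K \<and> 1 \<in> K \<and>
     (\<forall>x\<in>K. \<forall>y\<in>K. x + y \<in> K \<and> x - y \<in> K \<and> x * y \<in> K) \<and>
     (\<forall>x\<in>K. x \<noteq> 0 \<longrightarrow> inverse x \<in> K)"

definition number_field :: "complex set \<Rightarrow> bool" where
  "number_field K \<longleftrightarrow> is_subfield K \<and>
     (\<exists>B. finite B \<and> B \<subseteq> K \<and>
        (\<forall>x\<in>K. \<exists>c. (\<forall>b\<in>B. c b \<in> \<rat>) \<and> x = (\<Sum>b\<in>B. c b * b)))"

text \<open>A field automorphism of K, represented as a map on the complex numbers
that is the identity outside K.\<close>

definition field_aut :: "complex set \<Rightarrow> (complex \<Rightarrow> complex) \<Rightarrow> bool" where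
  "field_aut K \<sigma> \<longleftrightarrow> bij_betw \<sigma> K K \<and> (\<forall>x. x \<notin> K \<longrightarrow> \<sigma> x = x) \<and>
     (\<forall>x\<in>K. \<forall>y\<in>K. \<sigma> (x + y) = \<sigma> x + \<sigma> y \<and> \<sigma> (x * y) = \<sigma> x * \<sigma> y) \<and> \<sigma> 1 = 1"

definition aut_group :: "complex set \<Rightarrow> (complex \<Rightarrow> complex) set \<Rightarrow> bool" where
  "aut_group K G \<longleftrightarrow> finite G \<and> (\<forall>\<sigma>\<in>G. field_aut K \<sigma>) \<and> id \<in> G \<and>
     (\<forall>\<sigma>\<in>G. \<forall>\<tau>\<in>G. \<sigma> \<circ> \<tau> \<in> G) \<and> (\<forall>\<sigma>\<in>G. \<exists>\<tau>\<in>G. \<tau> \<circ> \<sigma> = id)"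

definition subgroup_of :: "(complex \<Rightarrow> complex) set \<Rightarrow> (complex \<Rightarrow> complex) set \<Rightarrow> bool" where
  "subgroup_of H G \<longleftrightarrow> H \<subseteq> G \<and> id \<in> H \<and>
     (\<forall>\<sigma>\<in>H. \<forall>\<tau>\<in>H. \<sigma> \<circ> \<tau> \<in> H) \<and> (\<forall>\<sigma>\<in>H. \<exists>\<tau>\<in>H. \<tau> \<circ> \<sigma> = id)"

definition fixed_field :: "complex set \<Rightarrow> (complex \<Rightarrow> complex) set \<Rightarrow> complex set" where
  "fixed_field K H = {x \<in> K. \<forall>\<sigma>\<in>H. \<sigma> x = x}"

definition roots_of_unity :: "complex set \<Rightarrow> complex set" where
  "roots_of_unity K = {x \<in> K. \<exists>n::nat. n > 0 \<and> x ^ n = 1}"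

definition w_ord :: "complex set \<Rightarrow> nat" where
  "w_ord K = card (roots_of_unity K)"

text \<open>Coefficient function of the norm idempotent eps_H in Q[G]
  (an element of Q[G] is identified with its coefficient function G \<rightarrow> Q).\<close>
definition norm_idem :: "(complex \<Rightarrow> complex) set \<Rightarrow> (complex \<Rightarrow> complex) \<Rightarrow> rat" where
  "norm_idem H g = (if g \<in> H then 1 / of_nat (card H) else 0)"

end

theory Submission imports Defs "HOL-Number_Theory.Number_Theory" "HOL-Algebra.Multiplicative_Group" "Berlekamp_Zassenhaus.Factor_Bound"
begin

lemma cis_root_pow_eq:
  fixes N :: nat assumes N: "N > 0"
  shows "cis (2 * pi / N) ^ i = cis (2 * pi / N) ^ j \<longleftrightarrow> i mod N = j mod N"
proof -
  let ?z = "cis (2 * pi / N)"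
  have zN: "?z ^ N = 1" using N by (simp add: DeMoivre)
  have red: "?z ^ i = ?z ^ (i mod N)" for i
  proof -
    have "?z ^ i = ?z ^ (N * (i div N) + i mod N)" by (metis mult_div_mod_eq)
    also have "\<dots> = (?z ^ N) ^ (i div N) * ?z ^ (i mod N)" by (simp only: power_add power_mult)
    also have "\<dots> = ?z ^ (i mod N)" by (simp add: zN)
    finally show ?thesis .
  qed
  have pk: "?z ^ k = cis (2 * pi * real k / real N)" for k
    by (simp add: DeMoivre mult_ac)
  have inj: "inj_on (\<lambda>k. cis (2 * pi * real k / real N)) {..<N}"
    using bij_betw_roots_unity[OF N] by (simp add: bij_betw_def)
  show ?thesis
  proof
    assume "?z ^ i = ?z ^ j"
    hence "?z ^ (i mod N) = ?z ^ (j mod N)" using red[of i] red[of j] by simp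
    hence "cis (2 * pi * real (i mod N) / real N) = cis (2 * pi * real (j mod N) / real N)"
      by (simp only: pk)
    thus "i mod N = j mod N" using inj N by (auto simp: inj_on_def)
  next
    assume "i mod N = j mod N" thus "?z ^ i = ?z ^ j" by (simp add: red[of i] red[of j])
  qed
qed

lemma cis_root_pow_1:
  fixes N :: nat assumes N: "N > 0"
  shows "cis (2 * pi / N) ^ i = 1 \<longleftrightarrow> N dvd i"
  using cis_root_pow_eq[OF N, of i 0] by (simp add: mod_eq_0_iff_dvd)

lemma cis_root_all:
  fixes N :: nat assumes N: "N > 0" and "w ^ N = 1"
  shows "\<exists>k. w = cis (2 * pi / N) ^ k"
proof -
  have "w \<in> (\<lambda>k. cis (2 * pi * real k / real N)) ` {..<N}"
    using bij_betw_roots_unity[OF N] assms(2) by (auto simp: bij_betw_def)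
  then obtain k where "w = cis (2 * pi * real k / real N)" by auto
  thus ?thesis by (intro exI[of _ k]) (simp add: DeMoivre mult_ac)
qed

lemma subfield_pow: "is_subfield K \<Longrightarrow> x \<in> K \<Longrightarrow> x ^ n \<in> K"
  by (induction n) (auto simp: is_subfield_def)

lemma fa_pow:
  assumes "is_subfield K" "field_aut K \<sigma>" "x \<in> K"
  shows "\<sigma> (x ^ n) = (\<sigma> x) ^ n"
proof (induction n)
  case 0 then show ?case using assms(2) by (simp add: field_aut_def)
next
  case (Suc n)
  have "x ^ n \<in> K" using subfield_pow assms by blast
  then show ?case using Suc assms by (simp add: field_aut_def)
qed

lemma fa_inj:
  assumes "field_aut K \<sigma>" shows "inj \<sigma>"
proof (rule injI)
  fix x y assume e: "\<sigma> x = \<sigma> y"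
  have b: "bij_betw \<sigma> K K" and o: "\<And>x. x \<notin> K \<Longrightarrow> \<sigma> x = x" using assms by (auto simp: field_aut_def)
  show "x = y"
  proof (cases "x \<in> K"; cases "y \<in> K")
    assume "x \<in> K" "y \<in> K" thus ?thesis using b e by (auto simp: bij_betw_def inj_on_def)
  next
    assume "x \<in> K" "y \<notin> K" thus ?thesis using b e o[of y] by (auto simp: bij_betw_def)
  next
    assume "x \<notin> K" "y \<in> K" thus ?thesis using b e o[of x] by (auto simp: bij_betw_def)
  next
    assume "x \<notin> K" "y \<notin> K" thus ?thesis using e o by auto
  qed
qed

lemma fa_mem: "field_aut K \<sigma> \<Longrightarrow> x \<in> K \<Longrightarrow> \<sigma> x \<in> K"
  by (auto simp: field_aut_def bij_betw_def)

lemma fa_root: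
  assumes "is_subfield K" "field_aut K \<sigma>" "x \<in> K" "x ^ N = 1"
  shows "(\<sigma> x) ^ N = 1"
  using fa_pow[OF assms(1-3), of N] assms(2,4) by (simp add: field_aut_def)

lemma rou_structure:
  assumes one: "1 \<in> K" and mult: "\<And>x y. x \<in> K \<Longrightarrow> y \<in> K \<Longrightarrow> x * y \<in> K"
    and fin: "finite (roots_of_unity K)"
  shows "w_ord K > 0 \<and> roots_of_unity K = {z. z ^ w_ord K = 1}"
proof -
  let ?S = "roots_of_unity K"
  have oneS: "1 \<in> ?S" using one by (auto simp: roots_of_unity_def intro: exI[of _ 1])
  hence pos: "w_ord K > 0" using fin by (auto simp: w_ord_def card_gt_0_iff)
  have nz: "x \<noteq> 0" if "x \<in> ?S" for x using that by (auto simp: roots_of_unity_def power_0_left)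
  have closed: "x * y \<in> ?S" if xs: "x \<in> ?S" and ys: "y \<in> ?S" for x y
  proof -
    obtain n where n: "n > 0" "x ^ n = 1" using xs by (auto simp: roots_of_unity_def)
    obtain m where m: "m > 0" "y ^ m = 1" using ys by (auto simp: roots_of_unity_def)
    have "(x * y) ^ (n * m) = (x ^ n) ^ m * (y ^ m) ^ n"
      by (simp add: power_mult_distrib flip: power_mult) (simp add: mult.commute)
    hence "(x * y) ^ (n * m) = 1" by (simp add: n m)
    thus ?thesis using xs ys n m mult by (auto simp: roots_of_unity_def intro!: exI[of _ "n*m"])
  qed
  have pw: "x ^ w_ord K = 1" if x: "x \<in> ?S" for x
  proof -
    have inj: "inj_on (\<lambda>y. x * y) ?S" using nz[OF x] by (auto simp: inj_on_def)
    have img: "(\<lambda>y. x * y) ` ?S = ?S"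
      by (rule endo_inj_surj[OF fin _ inj]) (use closed x in auto)
    have "prod (\<lambda>y. y) ?S = prod (\<lambda>y. y) ((\<lambda>y. x * y) ` ?S)" by (simp add: img)
    also have "\<dots> = prod (\<lambda>y. x * y) ?S" by (subst prod.reindex[OF inj]) simp
    also have "\<dots> = x ^ w_ord K * prod (\<lambda>y. y) ?S" by (simp add: prod.distrib w_ord_def)
    finally have "1 * prod (\<lambda>y. y) ?S = x ^ w_ord K * prod (\<lambda>y. y) ?S" by simp
    moreover have "prod (\<lambda>y. y) ?S \<noteq> 0" using fin nz by (simp add: prod_zero_iff)
    ultimately show ?thesis by (metis mult_right_cancel)
  qed
  have sub: "?S \<subseteq> {z. z ^ w_ord K = 1}" using pw by auto
  have "card ?S = card {z::complex. z ^ w_ord K = 1}"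
    using card_roots_unity_eq[OF pos] by (simp add: w_ord_def)
  hence "?S = {z. z ^ w_ord K = 1}"
    by (intro card_subset_eq[OF _ sub]) (auto intro: finite_roots_unity pos)
  thus ?thesis using pos by simp
qed

definition autgrp :: "(complex \<Rightarrow> complex) set \<Rightarrow> (complex \<Rightarrow> complex) monoid" where
  "autgrp H = \<lparr>partial_object.carrier = H, monoid.mult = (\<circ>), monoid.one = id\<rparr>"

lemma subgroup_pow_card:
  assumes "aut_group L G" "subgroup_of H G" "\<sigma> \<in> H"
  shows "\<sigma> ^^ card H = id"
proof -
  have grp: "Group.group (autgrp H)"
    by (rule groupI) (use assms(2) in \<open>auto simp: autgrp_def subgroup_of_def comp_assoc\<close>)
  have pw: "x [^]\<^bsub>autgrp H\<^esub> n = x ^^ n" for x and n :: nat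
    by (induction n) (simp_all add: autgrp_def funpow_Suc_right del: funpow.simps)
  have "\<sigma> [^]\<^bsub>autgrp H\<^esub> Coset.order (autgrp H) = \<one>\<^bsub>autgrp H\<^esub>"
    by (rule Multiplicative_Group.group.pow_order_eq_1[OF grp]) (use assms(3) in \<open>simp add: autgrp_def\<close>)
  thus ?thesis using pw[of \<sigma> "card H"] by (simp add: Coset.order_def autgrp_def)
qed

lemma cong_one_lift:
  fixes k r :: nat
  assumes p: "prime p" and k1: "[k = 1] (mod p)" and kr: "[k ^ r = 1] (mod p ^ a)"
    and r: "\<not> p dvd r"
  shows "[k = 1] (mod p ^ a)"
proof -
  have fac: "int k ^ r - 1 = (int k - 1) * (\<Sum>i<r. int k ^ i)"
    by (simp add: power_diff_1_eq)
  have s: "[(\<Sum>i<r. int k ^ i) = (\<Sum>i<r. 1)] (mod int p)"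
  proof (rule cong_sum)
    fix i show "[int k ^ i = 1] (mod int p)"
      using cong_pow[OF k1[unfolded cong_int_iff[symmetric]], of i] by simp
  qed
  have "\<not> int p dvd (\<Sum>i<r. int k ^ i)"
  proof
    assume "int p dvd (\<Sum>i<r. int k ^ i)"
    hence "int p dvd int r" using s by (simp add: cong_dvd_iff)
    thus False using r by simp
  qed
  hence cop: "Rings.coprime (int p ^ a) (\<Sum>i<r. int k ^ i)"
    using p by (simp add: prime_imp_coprime coprime_power_left_iff prime_nat_iff_prime)
  have "int p ^ a dvd int k ^ r - 1"
    using kr by (simp add: cong_int_iff[symmetric] cong_iff_dvd_diff of_nat_power)
  hence "int p ^ a dvd (int k - 1) * (\<Sum>i<r. int k ^ i)" by (simp add: fac)
  hence "int p ^ a dvd int k - 1" using cop coprime_dvd_mult_left_iff by blast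
  thus ?thesis by (simp add: cong_int_iff[symmetric] cong_iff_dvd_diff)
qed


lemma coeff_bound_roots:
  fixes p :: "complex poly"
  assumes "p \<noteq> 0" "\<forall>z. poly p z = 0 \<longrightarrow> norm z \<le> 1"
  shows "norm (coeff p k) \<le> 2 ^ degree p * norm (lead_coeff p)"
  using assms
proof (induction "degree p" arbitrary: p k)
  case 0
  then obtain c where pc: "p = [:c:]" by (metis degree_eq_zeroE)
  thus ?case by (cases k) auto
next
  case (Suc n)
  have "\<not> constant (poly p)" using Suc.hyps(2) constant_degree by (metis nat.distinct(1))
  then obtain z where z: "poly p z = 0" using fundamental_theorem_of_algebra by blast
  then obtain r where pr: "p = [:-z,1:] * r" using poly_eq_0_iff_dvd by (metis dvdE)
  have r0: "r \<noteq> 0" using Suc.prems pr by auto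
  have "degree p = degree [:-z,1:] + degree r" unfolding pr by (rule degree_mult_eq) (use r0 in auto)
  hence dr: "n = degree r" using Suc.hyps(2) by simp
  have lc: "lead_coeff p = lead_coeff r" unfolding pr by (subst lead_coeff_mult) simp
  have rr: "\<forall>w. poly r w = 0 \<longrightarrow> norm w \<le> 1" using Suc.prems(2) pr by auto
  have IH: "norm (coeff r i) \<le> 2^n * norm (lead_coeff r)" for i
    using Suc.hyps(1)[OF dr r0 rr] dr by simp
  have zn: "norm z \<le> 1" using Suc.prems(2) z by blast
  have cp: "coeff p k = - z * coeff r k + (if k = 0 then 0 else coeff r (k - 1))"
    by (cases k) (simp_all add: pr)
  have "norm (coeff p k) \<le> norm z * norm (coeff r k) + norm (if k = 0 then 0 else coeff r (k - 1))"
    unfolding cp by (metis norm_triangle_ineq norm_mult norm_minus_cancel)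
  also have "\<dots> \<le> 1 * (2^n * norm (lead_coeff r)) + 2^n * norm (lead_coeff r)"
    by (intro add_mono mult_mono zn IH) (auto intro: IH)
  also have "\<dots> = 2 ^ degree p * norm (lead_coeff p)" using Suc.hyps(2)[symmetric] lc by simp
  finally show ?case .
qed

lemma xn1_facts:
  assumes N: "N > 0"
  shows "coeff (monom 1 N - 1 :: 'a::comm_ring_1 poly) N = 1" "degree (monom 1 N - 1 :: 'a::comm_ring_1 poly) = N"
    "(monom 1 N - 1 :: 'a::comm_ring_1 poly) \<noteq> 0"
proof -
  show c: "coeff (monom 1 N - 1 :: 'a::comm_ring_1 poly) N = 1" using N by (simp add: coeff_monom coeff_1)
  have "degree (monom 1 N - 1 :: 'a::comm_ring_1 poly) \<le> N"
    by (intro degree_diff_le) (auto intro: degree_monom_le)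
  moreover have "degree (monom 1 N - 1 :: 'a::comm_ring_1 poly) \<ge> N" using c by (intro le_degree) simp
  ultimately show "degree (monom 1 N - 1 :: 'a::comm_ring_1 poly) = N" by simp
  show "(monom 1 N - 1 :: 'a::comm_ring_1 poly) \<noteq> 0" using c by (metis coeff_0 zero_neq_one)
qed

lemma int_dvd_xn1_coeff:
  fixes P :: "int poly" assumes N: "N > 0" and dv: "P dvd (monom 1 N - 1)"
  shows "\<bar>coeff P k\<bar> \<le> 2 ^ degree P"
proof -
  define X where "X = (monom 1 N - 1 :: int poly)"
  obtain R where XR: "X = P * R" using dv by (auto simp: X_def elim: dvdE)
  have "lead_coeff X = 1" unfolding X_def by (simp only: xn1_facts[OF N])
  hence "lead_coeff P * lead_coeff R = 1" using XR by (simp add: lead_coeff_mult)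
  hence lcP: "\<bar>lead_coeff P\<bar> = 1" by (metis abs_zmult_eq_1 abs_one)
  have X0: "X \<noteq> 0" using xn1_facts[OF N] by (simp add: X_def)
  have P0: "P \<noteq> 0" using XR X0 by auto
  define Pc where "Pc = (of_int_poly P :: complex poly)"
  have Pc0: "Pc \<noteq> 0" using P0 by (simp add: Pc_def)
  have roots: "norm z \<le> 1" if "poly Pc z = 0" for z
  proof -
    have "poly (of_int_poly X :: complex poly) z = 0" using that by (simp add: XR Pc_def hom_distribs)
    hence "z ^ N = 1" by (simp add: X_def hom_distribs poly_monom)
    hence "norm z ^ N = 1" by (metis norm_one norm_power)
    hence "norm z ^ N = 1 ^ N" by simp
    hence "norm z = 1" using power_eq_imp_eq_base[OF _ norm_ge_zero zero_le_one N] by blast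
    thus ?thesis by simp
  qed
  have "norm (coeff Pc k) \<le> 2 ^ degree Pc * norm (lead_coeff Pc)"
    by (rule coeff_bound_roots[OF Pc0]) (use roots in blast)
  moreover have "\<bar>real_of_int (lead_coeff P)\<bar> = 1" using lcP by (metis of_int_abs of_int_1)
  ultimately have "real_of_int \<bar>coeff P k\<bar> \<le> 2 ^ degree P"
    by (simp add: Pc_def)
  thus ?thesis by (metis of_int_le_iff of_int_numeral of_int_power)
qed

lemma finite_bounded_int_polys: "finite {P::int poly. degree P \<le> d \<and> (\<forall>k. \<bar>coeff P k\<bar> \<le> B)}"
proof -
  let ?A = "{P::int poly. degree P \<le> d \<and> (\<forall>k. \<bar>coeff P k\<bar> \<le> B)}"
  let ?f = "\<lambda>P. map (coeff P) [0..<Suc d]"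
  have "?f ` ?A \<subseteq> {xs. set xs \<subseteq> {-B..B} \<and> length xs = Suc d}"
    by (auto simp: abs_le_iff) (meson minus_le_iff)+
  hence fin: "finite (?f ` ?A)" by (rule finite_subset) (rule finite_lists_length_eq, simp)
  have "inj_on ?f ?A"
  proof (rule inj_onI)
    fix P Q assume P: "P \<in> ?A" and Q: "Q \<in> ?A" and eq: "?f P = ?f Q"
    show "P = Q"
    proof (rule poly_eqI)
      fix k show "coeff P k = coeff Q k"
      proof (cases "k \<le> d")
        case True
        have "\<forall>x\<in>{0..<Suc d}. coeff P x = coeff Q x" using eq by (simp only: map_eq_conv set_upt)
        thus ?thesis using True by simp
      next
        case False thus ?thesis using P Q by (simp add: coeff_eq_0)
      qed
    qed
  qed
  thus ?thesis using fin finite_imageD by blast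
qed

lemma poly_of_rat_mult: "poly (map_poly (of_rat::rat\<Rightarrow>complex) (a*b)) x = poly (map_poly of_rat a) x * poly (map_poly of_rat b) x"
proof -
  have "map_poly (of_rat::rat\<Rightarrow>complex) (a*b) = map_poly of_rat a * map_poly of_rat b"
    by (induction a) (simp_all add: hom_distribs)
  thus ?thesis by simp
qed

lemma poly_of_rat_add: "poly (map_poly (of_rat::rat\<Rightarrow>complex) (a+b)) x = poly (map_poly of_rat a) x + poly (map_poly of_rat b) x"
  by (simp add: hom_distribs)

lemma root_unity_small_int_poly:
  fixes x :: complex and q :: "rat poly"
  assumes N: "N > 0" "x ^ N = 1" and q: "q \<noteq> 0" "poly (map_poly of_rat q) x = 0"
  shows "\<exists>P::int poly. P dvd (monom 1 N - 1) \<and> degree P \<le> degree q \<and> poly (of_int_poly P) x = 0"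
proof -
  define X where "X = (monom 1 N - 1 :: int poly)"
  have X0: "X \<noteq> 0" using xn1_facts[OF N(1)] by (simp add: X_def)
  have Xx: "poly (of_int_poly X) x = 0" using N by (simp add: X_def hom_distribs poly_monom)
  define D where "D = {P::int poly. P dvd X \<and> poly (of_int_poly P) x = 0}"
  have "X \<in> D" by (simp add: D_def Xx)
  then obtain P where PD: "P \<in> D" and Pmin: "\<forall>Q. Q \<in> D \<longrightarrow> degree P \<le> degree Q"
    using ex_has_least_nat[of "\<lambda>P. P \<in> D" X degree] by blast
  have P0: "P \<noteq> 0" using PD X0 by (auto simp: D_def)
  define Pq where "Pq = (of_int_poly P :: rat poly)"
  have Pq0: "Pq \<noteq> 0" using P0 by (simp add: Pq_def)
  define f where "f = gcd Pq q"
  have f0: "f \<noteq> 0" using Pq0 by (simp add: f_def)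
  have fx: "poly (map_poly of_rat f) x = 0"
  proof -
    have "f = fst (bezout_coefficients Pq q) * Pq + snd (bezout_coefficients Pq q) * q"
      by (simp add: f_def bezout_coefficients_fst_snd)
    moreover have "poly (map_poly of_rat Pq) x = 0" using PD by (simp add: Pq_def D_def map_poly_map_poly o_def)
    ultimately show ?thesis using q(2) by (simp only: poly_of_rat_add poly_of_rat_mult) simp
  qed
  have "f dvd Pq" by (simp add: f_def)
  then obtain h where Pfh: "Pq = f * h" by (auto elim: dvdE)
  obtain g' h' where gh: "P = g' * h'" "degree g' = degree f" "degree h' = degree h"
    using rat_to_int_factor[of P f h] Pfh by (auto simp: Pq_def)
  have h0: "h \<noteq> 0" using Pfh Pq0 by auto
  have dPq: "degree P = degree f + degree h"
    using arg_cong[OF Pfh, of degree] f0 h0 by (simp add: Pq_def degree_mult_eq)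
  have "poly (of_int_poly g' :: complex poly) x * poly (of_int_poly h') x = 0"
    using PD gh(1) by (simp add: D_def hom_distribs)
  then consider "poly (of_int_poly g' :: complex poly) x = 0" | "poly (of_int_poly h' :: complex poly) x = 0"
    by auto
  thus ?thesis
  proof cases
    case 1
    have "g' dvd X" using PD gh(1) by (auto simp: D_def intro: dvd_trans)
    hence "g' \<in> D" using 1 by (simp add: D_def)
    hence "degree P \<le> degree g'" using Pmin by blast
    also have "\<dots> = degree f" by (rule gh(2))
    also have "\<dots> \<le> degree q" using q(1) by (simp add: f_def dvd_imp_degree_le)
    finally show ?thesis using PD by (auto simp: D_def X_def)
  next
    case 2
    have "h' dvd X" using PD gh(1) by (auto simp: D_def intro: dvd_trans)
    hence "h' \<in> D" using 2 by (simp add: D_def)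
    hence "degree P \<le> degree h'" using Pmin by blast
    hence "degree f = 0" using dPq gh(3) by simp
    then obtain c where "f = [:c:]" by (metis degree_eq_zeroE)
    with f0 fx have False by simp
    thus ?thesis ..
  qed
qed

lemma qvs: "vector_space (\<lambda>(r::rat) (z::complex). of_rat r * z)"
  unfolding vector_space_def
  apply (intro conjI allI)
  apply (simp_all add: distrib_left distrib_right of_rat_add of_rat_mult mult.assoc)
  done

lemma qmod: "Modules.module (\<lambda>(r::rat) (z::complex). of_rat r * z)"
  unfolding Modules.module_def
  apply (intro conjI allI)
  apply (simp_all add: distrib_left distrib_right of_rat_add of_rat_mult mult.assoc)
  done

lemma number_field_algebraic:
  assumes nf: "number_field L"
  obtains d where "\<forall>x\<in>L. \<exists>q::rat poly. q \<noteq> 0 \<and> degree q \<le> d \<and> poly (map_poly of_rat q) x = 0"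
proof -
  obtain B where B: "finite B" "B \<subseteq> L" "\<forall>x\<in>L. \<exists>c. (\<forall>b\<in>B. c b \<in> \<rat>) \<and> x = (\<Sum>b\<in>B. c b * b)"
    using nf by (auto simp: number_field_def)
  have sf: "is_subfield L" using nf by (simp add: number_field_def)
  have span: "x \<in> Modules.module.span (\<lambda>(r::rat) (z::complex). of_rat r * z) B" if "x \<in> L" for x
  proof -
    from bspec[OF B(3) that] obtain c where c0: "(\<forall>b\<in>B. c b \<in> \<rat>) \<and> x = (\<Sum>b\<in>B. c b * b)"
      by (rule exE)
    note c = conjunct1[OF c0] conjunct2[OF c0]
    have "\<forall>b\<in>B. \<exists>r. c b = of_rat r" using c(1) unfolding Rats_def by blast
    from bchoice[OF this] obtain r where r: "\<forall>b\<in>B. c b = of_rat (r b)" by blast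
    have "x = (\<Sum>b\<in>B. of_rat (r b) * b)" using c(2) r by simp
    moreover have "(\<Sum>b\<in>B. of_rat (r b) * b) \<in> range (\<lambda>u. \<Sum>v\<in>B. of_rat (u v) * v)" by (rule rangeI)
    ultimately show ?thesis using Modules.module.span_finite[OF qmod B(1)] by simp
  qed
  have "\<exists>q::rat poly. q \<noteq> 0 \<and> degree q \<le> card B \<and> poly (map_poly of_rat q) x = 0" if xL: "x \<in> L" for x
  proof (cases "inj_on (\<lambda>i. x ^ i) {..card B}")
    case False
    then obtain i j where ij: "i \<le> card B" "j \<le> card B" "i \<noteq> j" "x ^ i = x ^ j" by (auto simp: inj_on_def)
    define q where "q = (monom 1 i - monom 1 j :: rat poly)"
    have "coeff q i = 1" using ij by (simp add: q_def coeff_monom)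
    hence "q \<noteq> 0" by auto
    moreover have "degree q \<le> card B" unfolding q_def
      by (intro degree_diff_le) (use ij in \<open>auto intro: order.trans[OF degree_monom_le]\<close>)
    moreover have "map_poly (of_rat :: rat \<Rightarrow> complex) q = monom 1 i - monom 1 j"
      by (rule poly_eqI) (simp add: q_def coeff_map_poly coeff_monom of_rat_diff)
    hence "poly (map_poly of_rat q) x = 0" using ij by (simp add: poly_monom)
    ultimately show ?thesis by blast
  next
    case True
    define V where "V = (\<lambda>i. x ^ i) ` {..card B}"
    have cV: "card V = Suc (card B)" using True by (simp add: V_def card_image)
    have VL: "V \<subseteq> L" using xL sf subfield_pow by (auto simp: V_def)
    have Vs: "V \<subseteq> Modules.module.span (\<lambda>(r::rat) (z::complex). of_rat r * z) B" using VL span by auto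
    have dep: "Modules.module.dependent (\<lambda>(r::rat) (z::complex). of_rat r * z) V"
    proof (rule ccontr)
      assume "\<not> Modules.module.dependent (\<lambda>(r::rat) (z::complex). of_rat r * z) V"
      then have "finite V \<and> card V \<le> card B" by (rule vector_space.independent_span_bound[OF qvs B(1) _ Vs])
      then have "card V \<le> card B" by simp
      thus False using cV by simp
    qed
    have finV: "finite V" by (simp add: V_def)
    obtain u where u: "\<exists>v\<in>V. u v \<noteq> 0" "(\<Sum>v\<in>V. of_rat (u v) * v) = 0"
      using dep Modules.module.dependent_finite[OF qmod finV] by auto
    define q where "q = (\<Sum>i\<le>card B. monom (u (x ^ i)) i)"
    have cq: "coeff q k = (if k \<le> card B then u (x ^ k) else 0)" for k
      by (simp add: q_def coeff_sum coeff_monom)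
    obtain i where i: "i \<le> card B" "u (x ^ i) \<noteq> 0" using u(1) by (auto simp: V_def)
    have "q \<noteq> 0" using cq[of i] i by auto
    moreover have "degree q \<le> card B" by (rule degree_le) (simp add: cq)
    moreover have "poly (map_poly of_rat q) x = 0"
    proof -
      have "map_poly of_rat q = (\<Sum>i\<le>card B. monom (of_rat (u (x ^ i)) :: complex) i)"
        by (rule poly_eqI) (simp add: coeff_map_poly cq coeff_sum coeff_monom)
      hence "poly (map_poly of_rat q) x = (\<Sum>i\<le>card B. of_rat (u (x ^ i)) * x ^ i)"
        by (simp add: poly_sum poly_monom)
      also have "\<dots> = (\<Sum>v\<in>V. of_rat (u v) * v)" unfolding V_def by (subst sum.reindex[OF True]) simp
      also have "\<dots> = 0" by (rule u(2))
      finally show ?thesis .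
    qed
    ultimately show ?thesis by blast
  qed
  thus ?thesis using that by blast
qed

lemma nf_rou_finite: "number_field L \<Longrightarrow> finite (roots_of_unity L)"
proof -
  assume nf: "number_field L"
  obtain d where d: "\<forall>x\<in>L. \<exists>q::rat poly. q \<noteq> 0 \<and> degree q \<le> d \<and> poly (map_poly of_rat q) x = 0"
    using number_field_algebraic[OF nf] by blast
  define S where "S = {P::int poly. degree P \<le> d \<and> (\<forall>k. \<bar>coeff P k\<bar> \<le> 2 ^ d)} - {0}"
  have finS: "finite S" unfolding S_def using finite_bounded_int_polys by blast
  have sub: "roots_of_unity L \<subseteq> (\<Union>P\<in>S. {z. poly (of_int_poly P :: complex poly) z = 0})"
  proof
    fix x assume "x \<in> roots_of_unity L"
    then obtain N where x: "x \<in> L" "N > 0" "x ^ N = 1" by (auto simp: roots_of_unity_def)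
    obtain q where q: "q \<noteq> 0" "degree q \<le> d" "poly (map_poly of_rat q) x = 0" using d x(1) by blast
    obtain P :: "int poly" where P: "P dvd (monom 1 N - 1)" "degree P \<le> degree q" "poly (of_int_poly P) x = 0"
      using root_unity_small_int_poly[OF x(2,3) q(1,3)] by blast
    have P0: "P \<noteq> 0" using P(1) xn1_facts[OF x(2)] by auto
    have "\<bar>coeff P k\<bar> \<le> 2 ^ d" for k
    proof -
      have "\<bar>coeff P k\<bar> \<le> 2 ^ degree P" by (rule int_dvd_xn1_coeff[OF x(2) P(1)])
      also have "(2::int) ^ degree P \<le> 2 ^ d" using P(2) q(2) by (intro power_increasing) auto
      finally show ?thesis .
    qed
    hence "P \<in> S" using P0 P(2) q(2) by (auto simp: S_def)
    thus "x \<in> (\<Union>P\<in>S. {z. poly (of_int_poly P :: complex poly) z = 0})" using P(3) by blast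
  qed
  have "finite (\<Union>P\<in>S. {z. poly (of_int_poly P :: complex poly) z = 0})"
    using finS by (intro finite_UN_I) (auto simp: S_def intro!: poly_roots_finite)
  thus ?thesis using sub finite_subset by blast
qed

theorem proposition3p7:
  fixes L :: "complex set" and G :: "(complex \<Rightarrow> complex) set"
    and p :: nat and n :: "(complex \<Rightarrow> complex) set \<Rightarrow> int"
  assumes "number_field L"
    and "aut_group L G"
    and "prime p" and "p dvd w_ord L"
    and "\<forall>g\<in>G. (\<Sum>H\<in>{H. subgroup_of H G \<and> \<not> p dvd card H}.
                 of_int (n H) * norm_idem H g) = 0"
  shows "(\<Sum>H\<in>{H. subgroup_of H G \<and> \<not> p dvd card H}.
            n H * int (multiplicity p (w_ord (fixed_field L H)))) = 0"
proof -
  note nf = assms(1) and ag = assms(2) and p = assms(3) and pw = assms(4) and hyp = assms(5)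
  define S where "S = {H. subgroup_of H G \<and> \<not> p dvd card H}"
  have sf: "is_subfield L" using nf by (simp add: number_field_def)
  have finL: "finite (roots_of_unity L)" by (rule nf_rou_finite[OF nf])
  have finG: "finite G" using ag by (simp add: aut_group_def)
  have faG: "field_aut L \<sigma>" if "\<sigma> \<in> G" for \<sigma> using ag that by (simp add: aut_group_def)
  have compG: "\<sigma> \<circ> \<tau> \<in> G" if "\<sigma> \<in> G" "\<tau> \<in> G" for \<sigma> \<tau> using ag that by (simp add: aut_group_def)
  have p1: "p > 1" using p prime_gt_1_nat by blast
  define w where "w = w_ord L"
  have wstr: "w > 0 \<and> roots_of_unity L = {z. z ^ w = 1}"
    unfolding w_def by (rule rou_structure[OF _ _ finL]) (use sf in \<open>auto simp: is_subfield_def\<close>)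
  hence w0: "w > 0" and RL: "roots_of_unity L = {z. z ^ w = 1}" by auto
  have rootL: "z \<in> L" if "z ^ w = 1" for z using RL that by (auto simp: roots_of_unity_def)
  define a where "a = multiplicity p w"
  have nu: "\<not> is_unit p" using p1 by simp
  have pw1: "p ^ 1 dvd w" using pw by (simp add: w_def)
  have "w \<noteq> 0" using w0 by simp
  hence a1: "a \<ge> 1" unfolding a_def using multiplicity_geI[of w p 1] nu pw1 by blast
  define q where "q = p ^ a"
  have q0: "q > 0" using p1 by (simp add: q_def)
  have qw: "q dvd w" unfolding q_def a_def by (rule multiplicity_dvd)
  define \<zeta> where "\<zeta> = cis (2 * pi / q)"
  define \<eta> where "\<eta> = cis (2 * pi / p)"
  have zpow: "\<zeta> ^ i = \<zeta> ^ j \<longleftrightarrow> i mod q = j mod q" for i j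
    unfolding \<zeta>_def by (rule cis_root_pow_eq[OF q0])
  have epow: "\<eta> ^ i = \<eta> ^ j \<longleftrightarrow> i mod p = j mod p" for i j
    unfolding \<eta>_def by (rule cis_root_pow_eq) (use p1 in simp)
  have zq: "\<zeta> ^ q = 1" using zpow[of q 0] by simp
  have zw: "\<zeta> ^ w = 1" using zpow[of w 0] qw by simp
  have zL: "\<zeta> \<in> L" by (rule rootL[OF zw])
  have ez: "\<eta> = \<zeta> ^ (p ^ (a - 1))"
  proof -
    have "\<zeta> ^ (p ^ (a - 1)) = cis (real (p ^ (a - 1)) * (2 * pi / q))" by (simp add: \<zeta>_def DeMoivre)
    also have "real (p ^ (a - 1)) * (2 * pi / q) = 2 * pi / p"
    proof -
      have "q = p * p ^ (a - 1)" using a1 by (simp add: q_def power_eq_if[of p a])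
      thus ?thesis using p1 by (simp add: field_simps)
    qed
    finally show ?thesis by (simp add: \<eta>_def)
  qed
  have eL: "\<eta> \<in> L" using ez zL sf subfield_pow by blast
  have ep: "\<eta> ^ p = 1" using epow[of p 0] by simp
  have e1: "\<eta> \<noteq> 1" using epow[of 1 0] p1 by simp
  have kex: "\<exists>k. \<sigma> \<zeta> = \<zeta> ^ k" if "\<sigma> \<in> G" for \<sigma>
    unfolding \<zeta>_def by (rule cis_root_all[OF q0]) (use fa_root[OF sf faG[OF that] zL zq] in \<open>simp add: \<zeta>_def\<close>)
  have kexe: "\<exists>k. \<sigma> \<eta> = \<eta> ^ k" if "\<sigma> \<in> G" for \<sigma>
    unfolding \<eta>_def by (rule cis_root_all) (use fa_root[OF sf faG[OF that] eL ep] p1 in \<open>simp_all add: \<eta>_def\<close>)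
  have fix_ze: "\<sigma> \<eta> = \<eta>" if "\<sigma> \<in> G" "\<sigma> \<zeta> = \<zeta>" for \<sigma>
    using that fa_pow[OF sf faG[OF that(1)] zL] by (simp add: ez)
  have step4: "\<sigma> \<zeta> = \<zeta>" if HS: "H \<in> S" and sH: "\<sigma> \<in> H" and allH: "\<forall>h\<in>H. h \<eta> = \<eta>" for H \<sigma>
  proof -
    have sub: "subgroup_of H G" and pH: "\<not> p dvd card H" using HS by (auto simp: S_def)
    have sG: "\<sigma> \<in> G" using sub sH by (auto simp: subgroup_of_def)
    obtain k where k: "\<sigma> \<zeta> = \<zeta> ^ k" using kex[OF sG] by blast
    have "\<sigma> \<eta> = (\<sigma> \<zeta>) ^ (p ^ (a - 1))" using fa_pow[OF sf faG[OF sG] zL] by (simp add: ez)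
    also have "\<dots> = \<eta> ^ k" by (simp add: k ez flip: power_mult) (simp add: mult.commute)
    finally have ek: "\<sigma> \<eta> = \<eta> ^ k" .
    have "\<eta> ^ k = \<eta> ^ 1" using ek allH sH by (metis power_one_right)
    hence k1: "[k = 1] (mod p)" unfolding cong_def by (subst (asm) epow)
    have it: "(\<sigma> ^^ m) \<zeta> = \<zeta> ^ (k ^ m)" for m
    proof (induction m)
      case 0 then show ?case by simp
    next
      case (Suc m)
      have "(\<sigma> ^^ Suc m) \<zeta> = \<sigma> (\<zeta> ^ (k ^ m))" by (simp add: Suc)
      also have "\<dots> = (\<sigma> \<zeta>) ^ (k ^ m)" by (rule fa_pow[OF sf faG[OF sG] zL])
      also have "\<dots> = \<zeta> ^ (k ^ Suc m)" by (simp add: k flip: power_mult)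
      finally show ?case .
    qed
    have "\<zeta> ^ (k ^ card H) = \<zeta> ^ 1" using it[of "card H"] subgroup_pow_card[OF ag sub sH] by simp
    hence "[k ^ card H = 1] (mod q)" unfolding cong_def by (subst (asm) zpow)
    hence "[k = 1] (mod p ^ a)" using cong_one_lift[OF p k1 _ pH] by (simp add: q_def)
    hence "\<zeta> ^ k = \<zeta> ^ 1" unfolding cong_def q_def[symmetric] by (subst zpow)
    thus ?thesis using k by simp
  qed
  have ffacts: "w_ord (fixed_field L H) > 0 \<and> roots_of_unity (fixed_field L H) = {z. z ^ w_ord (fixed_field L H) = 1}
      \<and> (\<forall>z. z \<in> roots_of_unity (fixed_field L H) \<longleftrightarrow> z \<in> roots_of_unity L \<and> (\<forall>\<sigma>\<in>H. \<sigma> z = z))"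
    if sub: "subgroup_of H G" for H
  proof -
    have HG: "H \<subseteq> G" using sub by (simp add: subgroup_of_def)
    have eq: "z \<in> roots_of_unity (fixed_field L H) \<longleftrightarrow> z \<in> roots_of_unity L \<and> (\<forall>\<sigma>\<in>H. \<sigma> z = z)" for z
      by (auto simp: roots_of_unity_def fixed_field_def)
    have "finite (roots_of_unity (fixed_field L H))"
      by (rule finite_subset[OF _ finL]) (use eq in blast)
    moreover have "1 \<in> fixed_field L H" using sf HG faG by (auto simp: fixed_field_def is_subfield_def field_aut_def)
    moreover have "x * y \<in> fixed_field L H" if "x \<in> fixed_field L H" "y \<in> fixed_field L H" for x y
    proof -
      have "x \<in> L" "y \<in> L" using that by (auto simp: fixed_field_def)
      moreover have "\<sigma> (x * y) = x * y" if "\<sigma> \<in> H" for \<sigma>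
        using faG[of \<sigma>] HG[THEN subsetD, OF that] that \<open>x \<in> L\<close> \<open>y \<in> L\<close> \<open>x \<in> fixed_field L H\<close> \<open>y \<in> fixed_field L H\<close>
        by (auto simp: field_aut_def fixed_field_def)
      ultimately show ?thesis using sf by (auto simp: fixed_field_def is_subfield_def)
    qed
    ultimately show ?thesis using rou_structure[of "fixed_field L H"] eq by blast
  qed
  have nuH: "multiplicity p (w_ord (fixed_field L H)) = (if \<forall>h\<in>H. h \<zeta> = \<zeta> then a else 0)"
    if HS: "H \<in> S" for H
  proof -
    have sub: "subgroup_of H G" using HS by (auto simp: S_def)
    define d where "d = w_ord (fixed_field L H)"
    have d0: "d > 0" and RF: "roots_of_unity (fixed_field L H) = {z. z ^ d = 1}"
      and mem: "\<And>z. z \<in> roots_of_unity (fixed_field L H) \<longleftrightarrow> z \<in> roots_of_unity L \<and> (\<forall>\<sigma>\<in>H. \<sigma> z = z)"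
      using ffacts[OF sub] by (auto simp: d_def)
    have dw: "d dvd w"
    proof -
      have "cis (2 * pi / d) ^ d = 1" using cis_root_pow_1[OF d0, of d] by simp
      hence "cis (2 * pi / d) \<in> roots_of_unity L" using RF mem by blast
      hence "cis (2 * pi / d) ^ w = 1" using RL by blast
      thus ?thesis using cis_root_pow_1[OF d0] by simp
    qed
    show ?thesis
    proof (cases "\<forall>h\<in>H. h \<zeta> = \<zeta>")
      case True
      have "\<zeta> \<in> roots_of_unity L" using RL zw by simp
      hence "\<zeta> ^ d = 1" using mem[of \<zeta>] RF True by auto
      hence "q dvd d" using zpow[of d 0] by (simp add: mod_eq_0_iff_dvd)
      hence qd: "p ^ a dvd d" by (simp only: q_def)
      have "d \<noteq> 0" using d0 by simp
      hence "a \<le> multiplicity p d" using multiplicity_geI[of d p a] nu qd by blast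
      moreover have "multiplicity p d \<le> a" unfolding a_def using dvd_imp_multiplicity_le[of d w p] dw w0 by simp
      ultimately show ?thesis using True by (simp add: d_def)
    next
      case False
      have "\<not> p dvd d"
      proof
        assume "p dvd d"
        hence "\<eta> ^ d = 1" using epow[of d 0] by (simp add: mod_eq_0_iff_dvd)
        hence "\<eta> \<in> roots_of_unity (fixed_field L H)" using RF by simp
        hence "\<forall>h\<in>H. h \<eta> = \<eta>" using mem by blast
        hence "\<forall>h\<in>H. h \<zeta> = \<zeta>" using step4[OF HS] by blast
        thus False using False by blast
      qed
      hence "multiplicity p d = 0" by (simp add: not_dvd_imp_multiplicity_0)
      thus ?thesis using False by (auto simp: d_def)
    qed
  qed
  obtain g where g: "residue_primroot p g" using prime_primitive_root_exists[OF p1 p] by blast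
  have gcop: "Rings.coprime p g" and gord: "ord p g = p - 1"
    using g p by (auto simp: residue_primroot_def totient_prime)
  define j where "j = (\<lambda>\<sigma>::complex\<Rightarrow>complex. SOME i. i < p - 1 \<and> \<sigma> \<eta> = \<eta> ^ (g ^ i))"
  have jex: "j \<sigma> < p - 1 \<and> \<sigma> \<eta> = \<eta> ^ (g ^ j \<sigma>)" if sG: "\<sigma> \<in> G" for \<sigma>
  proof -
    obtain k where k: "\<sigma> \<eta> = \<eta> ^ k" using kexe[OF sG] by blast
    have "\<not> p dvd k"
    proof
      assume "p dvd k"
      hence "\<sigma> \<eta> = 1" using k epow[of k 0] by (simp add: mod_eq_0_iff_dvd)
      also have "1 = \<sigma> 1" using faG[OF sG] by (simp add: field_aut_def)
      finally show False using fa_inj[OF faG[OF sG]] e1 by (auto simp: inj_def)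
    qed
    note nd = this
    have cop: "Rings.coprime k p" using nd p by (metis prime_imp_coprime Rings.coprime_commute)
    have m0: "k mod p > 0" using nd by (simp add: mod_greater_zero_iff_not_dvd)
    have "k mod p < p" using p1 by simp
    hence m1: "k mod p \<le> p" by simp
    have m2: "Rings.coprime (k mod p) p" using cop p1 by simp
    have "k mod p \<in> totatives p" using m0 m1 m2 by (simp add: totatives_def)
    hence "k mod p \<in> (\<lambda>i. g ^ i mod p) ` {..<totient p}"
      using residue_primroot_is_generator[OF p1 g] by (simp add: bij_betw_def)
    then obtain i where i0: "i \<in> {..<totient p}" "k mod p = g ^ i mod p" by (rule imageE)
    hence i: "i < totient p" "g ^ i mod p = k mod p" by auto
    have "\<eta> ^ (g ^ i) = \<eta> ^ k" using epow i by simp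
    hence "\<exists>i. i < p - 1 \<and> \<sigma> \<eta> = \<eta> ^ (g ^ i)" using i k p by (auto simp: totient_prime)
    thus ?thesis unfolding j_def by (rule someI_ex)
  qed
  define u where "u = cis (2 * pi / (p - 1))"
  have p10: "p - 1 > 0" using p1 by simp
  have upow: "u ^ i = u ^ i' \<longleftrightarrow> i mod (p - 1) = i' mod (p - 1)" for i i'
    unfolding u_def using cis_root_pow_eq[OF p10] by simp
  define \<omega> where "\<omega> = (\<lambda>\<sigma>. u ^ j \<sigma>)"
  have \<omega>hom: "\<omega> (\<sigma> \<circ> \<tau>) = \<omega> \<sigma> * \<omega> \<tau>" if "\<sigma> \<in> G" "\<tau> \<in> G" for \<sigma> \<tau>
  proof -
    have "\<eta> ^ (g ^ j (\<sigma> \<circ> \<tau>)) = (\<sigma> \<circ> \<tau>) \<eta>" using jex[OF compG[OF that]] by simp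
    also have "\<dots> = \<sigma> (\<eta> ^ (g ^ j \<tau>))" using jex[OF that(2)] by simp
    also have "\<dots> = (\<sigma> \<eta>) ^ (g ^ j \<tau>)" by (rule fa_pow[OF sf faG[OF that(1)] eL])
    also have "\<dots> = \<eta> ^ (g ^ (j \<sigma> + j \<tau>))" using jex[OF that(1)] by (simp add: power_add flip: power_mult)
    finally have "[g ^ j (\<sigma> \<circ> \<tau>) = g ^ (j \<sigma> + j \<tau>)] (mod p)" using epow by (simp add: cong_def)
    hence "[j (\<sigma> \<circ> \<tau>) = j \<sigma> + j \<tau>] (mod (p - 1))" using order_divides_expdiff[OF gcop] gord by simp
    hence "u ^ j (\<sigma> \<circ> \<tau>) = u ^ (j \<sigma> + j \<tau>)" using upow by (simp add: cong_def)
    thus ?thesis by (simp add: \<omega>_def power_add)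
  qed
  have \<omega>1: "\<omega> \<sigma> = 1 \<longleftrightarrow> \<sigma> \<eta> = \<eta>" if sG: "\<sigma> \<in> G" for \<sigma>
  proof -
    have jl: "j \<sigma> < p - 1" and je: "\<sigma> \<eta> = \<eta> ^ (g ^ j \<sigma>)" using jex[OF sG] by auto
    have "\<omega> \<sigma> = 1 \<longleftrightarrow> j \<sigma> = 0" using upow[of "j \<sigma>" 0] jl by (simp add: \<omega>_def)
    also have "\<dots> \<longleftrightarrow> \<sigma> \<eta> = \<eta>"
    proof
      assume "j \<sigma> = 0" thus "\<sigma> \<eta> = \<eta>" using je by simp
    next
      assume "\<sigma> \<eta> = \<eta>"
      hence "\<eta> ^ (g ^ j \<sigma>) = \<eta> ^ (g ^ 0)" using je by simp
      hence "[g ^ j \<sigma> = g ^ 0] (mod p)" unfolding cong_def by (subst (asm) epow)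
      hence "[j \<sigma> = 0] (mod (p - 1))" using order_divides_expdiff[OF gcop, of "j \<sigma>" 0] gord by (simp del: power_0)
      thus "j \<sigma> = 0" using jl by (simp add: cong_def)
    qed
    finally show ?thesis .
  qed
  have chsum: "(\<Sum>h\<in>H. \<omega> h) = (if \<forall>h\<in>H. \<omega> h = 1 then of_nat (card H) else 0)"
    if sub: "subgroup_of H G" for H
  proof (cases "\<forall>h\<in>H. \<omega> h = 1")
    case True thus ?thesis by simp
  next
    case False
    then obtain h0 where h0: "h0 \<in> H" "\<omega> h0 \<noteq> 1" by blast
    have HG: "H \<subseteq> G" using sub by (simp add: subgroup_of_def)
    have finH: "finite H" using HG finG finite_subset by blast
    have h0G: "h0 \<in> G" using h0 HG by blast
    have inj: "inj_on (\<lambda>h. h0 \<circ> h) H"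
      using fa_inj[OF faG[OF h0G]] by (auto simp: inj_on_def inj_def fun_eq_iff)
    have img: "(\<lambda>h. h0 \<circ> h) ` H = H"
      by (rule endo_inj_surj[OF finH _ inj]) (use sub h0 in \<open>auto simp: subgroup_of_def\<close>)
    have "(\<Sum>h\<in>H. \<omega> h) = (\<Sum>h\<in>(\<lambda>h. h0 \<circ> h) ` H. \<omega> h)" by (simp add: img)
    also have "\<dots> = (\<Sum>h\<in>H. \<omega> (h0 \<circ> h))" by (subst sum.reindex[OF inj]) simp
    also have "\<dots> = (\<Sum>h\<in>H. \<omega> h0 * \<omega> h)" using HG h0G by (intro sum.cong refl \<omega>hom) auto
    also have "\<dots> = \<omega> h0 * (\<Sum>h\<in>H. \<omega> h)" by (simp add: sum_distrib_left)
    finally have "(1 - \<omega> h0) * (\<Sum>h\<in>H. \<omega> h) = 0" by (simp add: algebra_simps)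
    thus ?thesis using h0 False by auto
  qed
  have sH_iff: "(\<forall>h\<in>H. h \<zeta> = \<zeta>) \<longleftrightarrow> (\<forall>h\<in>H. \<omega> h = 1)" if HS: "H \<in> S" for H
  proof -
    have HG: "H \<subseteq> G" using HS by (simp add: S_def subgroup_of_def)
    show ?thesis
    proof
      assume "\<forall>h\<in>H. h \<zeta> = \<zeta>" thus "\<forall>h\<in>H. \<omega> h = 1" using HG fix_ze \<omega>1 by blast
    next
      assume "\<forall>h\<in>H. \<omega> h = 1"
      hence "\<forall>h\<in>H. h \<eta> = \<eta>" using HG \<omega>1 by blast
      thus "\<forall>h\<in>H. h \<zeta> = \<zeta>" using step4[OF HS] by blast
    qed
  qed
  have finS: "finite S" by (rule finite_subset[of _ "Pow G"]) (use finG in \<open>auto simp: S_def subgroup_of_def\<close>)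
  define s where "s = (\<lambda>H. if \<forall>h\<in>H. \<omega> h = 1 then (1::int) else 0)"
  have lhs: "(\<Sum>H\<in>S. n H * int (multiplicity p (w_ord (fixed_field L H)))) = int a * (\<Sum>H\<in>S. n H * s H)"
    by (simp add: sum_distrib_left nuH sH_iff s_def cong: sum.cong) (intro sum.cong refl, auto)
  have "(of_int (\<Sum>H\<in>S. n H * s H) :: complex) = 0"
  proof -
    have e1: "(of_int (s H) :: complex) = (\<Sum>g\<in>G. of_rat (norm_idem H g) * \<omega> g)" if HS: "H \<in> S" for H
    proof -
      have sub: "subgroup_of H G" using HS by (simp add: S_def)
      have HG: "H \<subseteq> G" using sub by (simp add: subgroup_of_def)
      have finH: "finite H" using HG finG finite_subset by blast
      have cH: "card H > 0" using finH sub by (auto simp: subgroup_of_def card_gt_0_iff)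
      have "(\<Sum>g\<in>G. of_rat (norm_idem H g) * \<omega> g) = (\<Sum>g\<in>G. if g \<in> H then \<omega> g / of_nat (card H) else 0)"
        by (intro sum.cong refl) (auto simp: norm_idem_def of_rat_divide)
      also have "\<dots> = (\<Sum>g\<in>G \<inter> H. \<omega> g / of_nat (card H))"
        by (rule sum.inter_restrict[symmetric, OF finG])
      also have "\<dots> = (\<Sum>g\<in>H. \<omega> g / of_nat (card H))" using HG by (simp add: Int_absorb1)
      also have "\<dots> = (\<Sum>g\<in>H. \<omega> g) / of_nat (card H)" by (simp add: sum_divide_distrib)
      also have "\<dots> = of_int (s H)" using chsum[OF sub] cH by (simp add: s_def)
      finally show ?thesis by simp
    qed
    have "(of_int (\<Sum>H\<in>S. n H * s H) :: complex) = (\<Sum>H\<in>S. of_int (n H) * of_int (s H))" by simp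
    also have "\<dots> = (\<Sum>H\<in>S. \<Sum>g\<in>G. of_int (n H) * of_rat (norm_idem H g) * \<omega> g)"
      by (intro sum.cong refl) (simp add: e1 sum_distrib_left mult.assoc)
    also have "\<dots> = (\<Sum>g\<in>G. \<Sum>H\<in>S. of_int (n H) * of_rat (norm_idem H g) * \<omega> g)" by (rule sum.swap)
    also have "\<dots> = (\<Sum>g\<in>G. of_rat (\<Sum>H\<in>S. of_int (n H) * norm_idem H g) * \<omega> g)"
      by (simp add: of_rat_sum of_rat_mult sum_distrib_right)
    also have "\<dots> = 0" using hyp by (simp add: S_def)
    finally show ?thesis .
  qed
  hence "(\<Sum>H\<in>S. n H * s H) = 0" by (simp only: of_int_eq_0_iff)
  thus ?thesis using lhs by (simp add: S_def)
qed

end
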